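(* Let $2\le n<m$. Suppose $\lambda$ is a characteristic matrix (resp. real characteristic matrix) on $C^{n+1}(m+1)^*$ of the block form $$\lambda=\begin{pmatrix}1 & a_2\ \cdots\ a_{m+1}\\ \mathbf{0} & A\end{pmatrix},$$ where $\mathbf{0}$ is the zero column of length $n$ and $A$ is an $n\times m$ matrix. Then $A$ is a characteristic matrix (resp. real characteristic matrix) on $C^n(m)^*$.
   Context: For $2\le n<m$, $C^n(m)^*$ is the dual of the cyclic polytope $C^n(m)$, a simple $n$-polytope with facets $F_1,\ldots,F_m$ labeled so that $F_{i_1},\ldots,F_{i_n}$ meet at a vertex iff $\{i_1,\ldots,i_n\}$ is a disjoint union of sets of the form $I_j=\{j,j+1\}\cap\{1,\ldots,m\}$, $j\in\{0,\ldots,m\}$ (dual Gale evenness condition); the same labeling convention is used for $C^{n+1}(m+1)^*$. A characteristic matrix on a simple $n$-polytope with facets $F_1,\ldots,F_m$ is an integer $n\times m$ matrix whose columns $\boldsymbol\lambda_{i_1},\ldots,\boldsymbol\lambda_{i_n}$ have determinant $\pm1$ whenever $F_{i_1},\ldots,F_{i_n}$ meet at a vertex; a real characteristic matrix is the analogue over $\mathbb{Z}/2$ with determinant $1$. *)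

theory Defs
  imports "HOL-Library.Z2" "Jordan_Normal_Form.Determinant" "Jordan_Normal_Form.DL_Submatrix"
begin

definition gale_block :: "nat \<Rightarrow> nat \<Rightarrow> nat set" where
  "gale_block m j = {j, j + 1} \<inter> {1..m}"

text \<open>Dual Gale evenness: the facets labelled by S meet at a vertex of the dual
  cyclic polytope C^n(m)^* iff S is an n-element set which is a disjoint union of
  sets I_j, j \<in> {0..m}.\<close>
definition dual_cyclic_vertex :: "nat \<Rightarrow> nat \<Rightarrow> nat set \<Rightarrow> bool" where
  "dual_cyclic_vertex n m S \<longleftrightarrow>
     S \<subseteq> {1..m} \<and> card S = n \<and>
     (\<exists>J \<subseteq> {0..m}. disjoint_family_on (gale_block m) J \<and> \<Union>(gale_block m ` J) = S)"

text \<open>Generic characteristic-matrix condition over a commutative ring: an n x m matrix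
  (column k-1 corresponds to facet F_k) such that for every vertex, the n x n
  submatrix of the corresponding columns has determinant \<plusminus>1.\<close>
definition char_matrix_over :: "nat \<Rightarrow> nat \<Rightarrow> 'a :: comm_ring_1 mat \<Rightarrow> bool" where
  "char_matrix_over n m L \<longleftrightarrow>
     L \<in> carrier_mat n m \<and>
     (\<forall>S. dual_cyclic_vertex n m S \<longrightarrow>
        det (submatrix L UNIV ((\<lambda>k. k - 1) ` S)) \<in> {1, -1})"

definition characteristic_matrix :: "nat \<Rightarrow> nat \<Rightarrow> int mat \<Rightarrow> bool" where
  "characteristic_matrix n m L \<longleftrightarrow> char_matrix_over n m L"

text \<open>Real characteristic matrix: matrix over Z/2 (type bit), determinants 1
  (in Z/2, -1 = 1, so this is the same condition).\<close>
definition real_characteristic_matrix :: "nat \<Rightarrow> nat \<Rightarrow> bit mat \<Rightarrow> bool" where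
  "real_characteristic_matrix n m L \<longleftrightarrow>
     L \<in> carrier_mat n m \<and>
     (\<forall>S. dual_cyclic_vertex n m S \<longrightarrow>
        det (submatrix L UNIV ((\<lambda>k. k - 1) ` S)) = 1)"

definition block_form :: "nat \<Rightarrow> nat \<Rightarrow> 'a :: {zero,one} mat \<Rightarrow> 'a mat \<Rightarrow> bool" where
  "block_form n m L A \<longleftrightarrow>
     L \<in> carrier_mat (n + 1) (m + 1) \<and> A \<in> carrier_mat n m \<and>
     L $$ (0, 0) = 1 \<and> (\<forall>i<n. L $$ (i + 1, 0) = 0) \<and>
     (\<forall>i<n. \<forall>j<m. L $$ (i + 1, j + 1) = A $$ (i, j))"

end

theory Submission
  imports Defs
begin

lemma pick_shift0: "pick (insert 0 (Suc ` T)) 0 = 0"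
  by (simp add: Least_eq_0)

lemma pick_shift:
  assumes "j < card T"
  shows "pick (insert 0 (Suc ` T)) (Suc j) = Suc (pick T j)"
  using assms
proof (induction j)
  case 0
  have fin: "finite T" using 0 card.infinite by fastforce
  have ne: "T \<noteq> {}" using 0 by auto
  have "(LEAST a. a \<in> insert 0 (Suc ` T) \<and> 0 < a) = Suc (LEAST t. t \<in> T)"
  proof (rule Least_equality)
    show "Suc (LEAST t. t \<in> T) \<in> insert 0 (Suc ` T) \<and> 0 < Suc (LEAST t. t \<in> T)"
      using ne by (auto intro: LeastI)
    fix y assume "y \<in> insert 0 (Suc ` T) \<and> 0 < y"
    then obtain t where "t \<in> T" "y = Suc t" by auto
    then show "Suc (LEAST t. t \<in> T) \<le> y" by (simp add: Least_le)
  qed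
  then show ?case by (simp add: pick_shift0)
next
  case (Suc j)
  have IH: "pick (insert 0 (Suc ` T)) (Suc j) = Suc (pick T j)" using Suc by simp
  have ex: "pick T (Suc j) \<in> T \<and> pick T j < pick T (Suc j)"
    using pick_in_set_le[OF Suc.prems] pick_mono_le[OF Suc.prems, of j] by simp
  have "(LEAST a. a \<in> insert 0 (Suc ` T) \<and> Suc (pick T j) < a) = Suc (LEAST a. a \<in> T \<and> pick T j < a)"
  proof (rule Least_equality)
    show "Suc (LEAST a. a \<in> T \<and> pick T j < a) \<in> insert 0 (Suc ` T) \<and> Suc (pick T j) < Suc (LEAST a. a \<in> T \<and> pick T j < a)"
      using LeastI[of "\<lambda>a. a \<in> T \<and> pick T j < a", OF ex] by auto
    fix y assume "y \<in> insert 0 (Suc ` T) \<and> Suc (pick T j) < y"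
    then obtain t where "t \<in> T" "y = Suc t" "pick T j < t" by auto
    then show "Suc (LEAST a. a \<in> T \<and> pick T j < a) \<le> y" by (simp add: Least_le)
  qed
  then show ?case using IH by simp
qed

lemma key:
  fixes L :: "'a::comm_ring_1 mat"
  assumes bf: "block_form n m L A" and T: "T \<subseteq> {0..<m}" and cT: "card T = n"
  shows "det (submatrix L UNIV (insert 0 (Suc ` T))) = det (submatrix A UNIV T)"
proof -
  let ?T' = "insert 0 (Suc ` T)"
  define B where "B = submatrix L UNIV ?T'"
  have Ld: "dim_row L = n + 1" "dim_col L = m + 1" and Ad: "dim_row A = n" "dim_col A = m"
    using bf unfolding block_form_def by auto
  have finT: "finite T" using T finite_subset by blast
  have c1: "card {i. i < dim_row L \<and> i \<in> (UNIV::nat set)} = n + 1" using Ld by simp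
  have "{j. j < dim_col L \<and> j \<in> ?T'} = ?T'" using T Ld by auto
  moreover have "card ?T' = n + 1" using finT cT by (simp add: card_image)
  ultimately have c2: "card {j. j < dim_col L \<and> j \<in> ?T'} = n + 1" by simp
  have c3: "card {i. i < dim_row A \<and> i \<in> (UNIV::nat set)} = n" using Ad by simp
  have "{j. j < dim_col A \<and> j \<in> T} = T" using T Ad by auto
  then have c4: "card {j. j < dim_col A \<and> j \<in> T} = n" using cT by simp
  have Bc: "B \<in> carrier_mat (n+1) (n+1)" unfolding B_def carrier_mat_def
    using c1 c2 dim_submatrix[of L UNIV ?T'] by (simp del: insert_iff UNIV_I)
  have Bent: "B $$ (i, j) = L $$ (i, pick ?T' j)" if "i < n+1" "j < n+1" for i j
    unfolding B_def using submatrix_index[of i L UNIV j ?T'] c1 c2 that by (simp add: pick_UNIV)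
  have "det B = (\<Sum>i<n+1. B $$ (i,0) * cofactor B i 0)"
    by (rule laplace_expansion_column[OF Bc]) simp
  also have "\<dots> = (\<Sum>i<n+1. (if i = 0 then cofactor B 0 0 else 0))"
  proof (rule sum.cong)
    fix i assume i: "i \<in> {..<n+1}"
    have "B $$ (i,0) = L $$ (i, 0)" using Bent[of i 0] i by (simp add: pick_shift0)
    moreover have "L $$ (i, 0) = (if i = 0 then 1 else 0)"
      using bf i unfolding block_form_def by (cases i) auto
    ultimately show "B $$ (i,0) * cofactor B i 0 = (if i = 0 then cofactor B 0 0 else 0)" by simp
  qed simp
  also have "\<dots> = cofactor B 0 0" by simp
  also have "\<dots> = det (mat_delete B 0 0)" unfolding cofactor_def by simp
  also have "mat_delete B 0 0 = submatrix A UNIV T"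
  proof (rule eq_matI)
    show "dim_row (mat_delete B 0 0) = dim_row (submatrix A UNIV T)"
      using Bc c3 by (simp add: dim_submatrix)
    show "dim_col (mat_delete B 0 0) = dim_col (submatrix A UNIV T)"
      using Bc c4 by (simp add: dim_submatrix)
    fix i j assume i: "i < dim_row (submatrix A UNIV T)" and j: "j < dim_col (submatrix A UNIV T)"
    then have i': "i < n" and j': "j < n" using c3 c4 by (auto simp: dim_submatrix)
    have pj: "pick T j \<in> T" using pick_in_set_le[of j T] cT j' by simp
    have "mat_delete B 0 0 $$ (i, j) = B $$ (Suc i, Suc j)"
      unfolding mat_delete_def using Bc i' j' by auto
    also have "\<dots> = L $$ (Suc i, Suc (pick T j))"
      using Bent[of "Suc i" "Suc j"] i' j' pick_shift[of j T] cT by simp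
    also have "\<dots> = A $$ (i, pick T j)"
      using bf i' pj T unfolding block_form_def by auto
    also have "\<dots> = submatrix A UNIV T $$ (i, j)"
      using submatrix_index[of i A UNIV j T] c3 c4 i' j' by (simp add: pick_UNIV)
    finally show "mat_delete B 0 0 $$ (i, j) = submatrix A UNIV T $$ (i, j)" .
  qed
  finally show ?thesis unfolding B_def .
qed


lemma gb_Suc: "gale_block (m+1) (Suc j) = Suc ` gale_block m j \<union> (if j = 0 then {1} else {})"
  unfolding gale_block_def by (auto simp: image_iff)

lemma gb_0: "gale_block (m+1) 0 = {1}"
  unfolding gale_block_def by auto

lemma gb_m0: "m \<ge> 1 \<Longrightarrow> gale_block m 0 = {1}"
  unfolding gale_block_def by auto

lemma gb_sub: "gale_block m j \<subseteq> {1..m}"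
  unfolding gale_block_def by auto

lemma vertex_lift:
  assumes m: "m \<ge> 1" and V: "dual_cyclic_vertex n m S"
  shows "dual_cyclic_vertex (n+1) (m+1) (insert 1 (Suc ` S))"
proof -
  from V obtain J where S: "S \<subseteq> {1..m}" "card S = n" and J: "J \<subseteq> {0..m}"
    and D: "disjoint_family_on (gale_block m) J" and U: "\<Union>(gale_block m ` J) = S"
    unfolding dual_cyclic_vertex_def by blast
  have finS: "finite S" using S finite_subset by blast
  have c: "card (insert 1 (Suc ` S)) = n + 1"
  proof -
    have "1 \<notin> Suc ` S" using S by auto
    then have "card (insert 1 (Suc ` S)) = Suc (card (Suc ` S))" using finS by simp
    then show ?thesis using S by (simp add: card_image)
  qed
  have sub: "insert 1 (Suc ` S) \<subseteq> {1..m+1}" using S by auto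
  show ?thesis
  proof (cases "0 \<in> J")
    case True
    define J' where "J' = Suc ` J"
    have "J' \<subseteq> {0..m+1}" using J unfolding J'_def by auto
    moreover have "disjoint_family_on (gale_block (m+1)) J'"
      unfolding disjoint_family_on_def J'_def
    proof (intro ballI impI)
      fix x y assume x: "x \<in> Suc ` J" and y: "y \<in> Suc ` J" and xy: "x \<noteq> y"
      then obtain a b where a: "a \<in> J" and b: "b \<in> J" and xa: "x = Suc a" and yb: "y = Suc b" by blast
      have ne: "Suc a \<noteq> Suc b" using xy xa yb by simp
      have ab: "gale_block m a \<inter> gale_block m b = {}"
        using D a b ne unfolding disjoint_family_on_def by auto
      have "1 \<notin> gale_block m b" if "a = 0" using ab that gb_m0[OF m] by auto
      moreover have "1 \<notin> gale_block m a" if "b = 0" using ab that gb_m0[OF m] by auto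
      ultimately show "gale_block (m+1) x \<inter> gale_block (m+1) y = {}"
        unfolding xa yb
        unfolding gb_Suc using ab ne gb_sub[of m a] gb_sub[of m b]
        by (auto simp: image_iff)
    qed
    moreover have "\<Union>(gale_block (m+1) ` J') = insert 1 (Suc ` S)"
    proof -
      have "\<Union>(gale_block (m+1) ` J') = (\<Union>j\<in>J. Suc ` gale_block m j \<union> (if j = 0 then {1} else {}))"
        unfolding J'_def image_image gb_Suc by simp
      also have "\<dots> = (\<Union>j\<in>J. Suc ` gale_block m j) \<union> {1}"
        using True by (auto split: if_splits)
      also have "\<dots> = insert 1 (Suc ` S)" using U by auto
      finally show ?thesis .
    qed
    ultimately show ?thesis unfolding dual_cyclic_vertex_def using c sub by blast
  next
    case False
    define J' where "J' = insert 0 (Suc ` J)"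
    have "J' \<subseteq> {0..m+1}" using J unfolding J'_def by auto
    moreover have "disjoint_family_on (gale_block (m+1)) J'"
      unfolding disjoint_family_on_def J'_def
    proof (intro ballI impI)
      have sj: "\<And>j. j \<in> J \<Longrightarrow> gale_block (m+1) (Suc j) = Suc ` gale_block m j"
        using False unfolding gb_Suc by auto
      have nz: "\<And>j. j \<in> J \<Longrightarrow> 1 \<notin> Suc ` gale_block m j" using gb_sub by fastforce
      fix a b assume a: "a \<in> insert 0 (Suc ` J)" and b: "b \<in> insert 0 (Suc ` J)" and ne: "a \<noteq> b"
      show "gale_block (m+1) a \<inter> gale_block (m+1) b = {}"
      proof (cases "a = 0")
        case True
        then obtain b' where "b = Suc b'" "b' \<in> J" using b ne by auto
        then show ?thesis using True sj nz gb_0 by auto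
      next
        case a0: False
        then obtain a' where a': "a = Suc a'" "a' \<in> J" using a by auto
        show ?thesis
        proof (cases "b = 0")
          case True then show ?thesis using a' sj nz gb_0 by auto
        next
          case False
          then obtain b' where b': "b = Suc b'" "b' \<in> J" using b by auto
          have "gale_block m a' \<inter> gale_block m b' = {}"
            using D a' b' ne unfolding disjoint_family_on_def by auto
          then show ?thesis using a' b' sj by (auto simp: image_iff)
        qed
      qed
    qed
    moreover have "\<Union>(gale_block (m+1) ` J') = insert 1 (Suc ` S)"
    proof -
      have "\<Union>(gale_block (m+1) ` J') = gale_block (m+1) 0 \<union> (\<Union>j\<in>J. Suc ` gale_block m j \<union> (if j = 0 then {1} else {}))"
        unfolding J'_def image_insert image_image gb_Suc by simp
      also have "\<dots> = insert 1 (\<Union>j\<in>J. Suc ` gale_block m j)"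
        unfolding gb_0 using False by (auto split: if_splits)
      also have "\<dots> = insert 1 (Suc ` S)" using U by auto
      finally show ?thesis .
    qed
    ultimately show ?thesis unfolding dual_cyclic_vertex_def using c sub by blast
  qed
qed

lemma img_shift:
  assumes "S \<subseteq> {1..m}"
  shows "(\<lambda>k. k - 1) ` insert 1 (Suc ` S) = insert 0 (Suc ` ((\<lambda>k. k - 1) ` S))"
proof -
  have "(\<lambda>k. k - 1) ` insert 1 (Suc ` S) = insert 0 S" by (auto simp: image_iff)
  moreover have "Suc ` ((\<lambda>k. k - 1) ` S) = S"
    using assms by (force simp: image_iff)
  ultimately show ?thesis by simp
qed

lemma Tprops:
  assumes "dual_cyclic_vertex n m S"
  shows "(\<lambda>k. k - 1) ` S \<subseteq> {0..<m}" "card ((\<lambda>k. k - 1) ` S) = n" "S \<subseteq> {1..m}"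
proof -
  have S: "S \<subseteq> {1..m}" "card S = n" using assms unfolding dual_cyclic_vertex_def by auto
  then show "(\<lambda>k. k - 1) ` S \<subseteq> {0..<m}" by force
  have "inj_on (\<lambda>k. k - 1) S" using S unfolding inj_on_def
    by (metis Suc_diff_1 atLeastAtMost_iff less_eq_Suc_le subsetD zero_less_one One_nat_def)
  then show "card ((\<lambda>k. k - 1) ` S) = n" using S by (simp add: card_image)
  show "S \<subseteq> {1..m}" using S by simp
qed

lemma main_gen:
  fixes L :: "'a::comm_ring_1 mat"
  assumes m: "m \<ge> 1" and bf: "block_form n m L A"
    and V: "dual_cyclic_vertex n m S"
  shows "det (submatrix A UNIV ((\<lambda>k. k - 1) ` S)) =
         det (submatrix L UNIV ((\<lambda>k. k - 1) ` insert 1 (Suc ` S)))"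
  using key[OF bf Tprops(1,2)[OF V]] img_shift[OF Tprops(3)[OF V]] by simp

theorem lemma6p1:
  fixes n m :: nat
  assumes "2 \<le> n" and "n < m"
  shows "(\<forall>(L :: int mat) A. block_form n m L A \<and> characteristic_matrix (n + 1) (m + 1) L
            \<longrightarrow> characteristic_matrix n m A) \<and>
         (\<forall>(L :: bit mat) A. block_form n m L A \<and> real_characteristic_matrix (n + 1) (m + 1) L
            \<longrightarrow> real_characteristic_matrix n m A)"
proof -
  have m: "m \<ge> 1" using assms by simp
  show ?thesis
  proof (intro conjI allI impI; elim conjE)
    fix L :: "int mat" and A
    assume bf: "block_form n m L A" and C: "characteristic_matrix (n + 1) (m + 1) L"
    show "characteristic_matrix n m A"
      unfolding characteristic_matrix_def char_matrix_over_def
    proof (intro conjI allI impI)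
      show "A \<in> carrier_mat n m" using bf unfolding block_form_def by simp
      fix S assume V: "dual_cyclic_vertex n m S"
      show "det (submatrix A UNIV ((\<lambda>k. k - 1) ` S)) \<in> {1, -1}"
        unfolding main_gen[OF m bf V]
        using vertex_lift[OF m V] C
        unfolding characteristic_matrix_def char_matrix_over_def by blast
    qed
  next
    fix L :: "bit mat" and A
    assume bf: "block_form n m L A" and C: "real_characteristic_matrix (n + 1) (m + 1) L"
    show "real_characteristic_matrix n m A"
      unfolding real_characteristic_matrix_def
    proof (intro conjI allI impI)
      show "A \<in> carrier_mat n m" using bf unfolding block_form_def by simp
      fix S assume V: "dual_cyclic_vertex n m S"
      show "det (submatrix A UNIV ((\<lambda>k. k - 1) ` S)) = 1"
        unfolding main_gen[OF m bf V]
        using vertex_lift[OF m V] C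
        unfolding real_characteristic_matrix_def by blast
    qed
  qed
qed

end
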